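(* In the coefficient-choosing game of degree $d = 3$ over $R = \mathbb{Z}/16\mathbb{Z}$, Wanda has a winning strategy irrespective of whether she is the first or the second player.
   Context: The coefficient-choosing game of degree $d$ over $R$: Nora and Wanda alternately choose coefficients of $f(x) = a_d x^d + \cdots + a_0$; on each move the current player picks a not-yet-chosen coefficient and assigns it a value in $R$, subject to $a_d \neq 0$, $a_0 \neq 0$. After all $d+1$ coefficients are chosen, Wanda wins if $f$ has a root in $R$, and Nora wins otherwise. *)

theory Defs
  imports Main "HOL-Library.Numeral_Type"
begin

text \<open>A position is a partial assignment s :: nat \<Rightarrow> 'a option of the coefficients
  a_0, ..., a_d (index i \<mapsto> coefficient of x^i; None = not yet chosen).
  The boolean flag says whether it is Wanda's turn to move.\<close>

definition complete :: "nat \<Rightarrow> (nat \<Rightarrow> 'a option) \<Rightarrow> bool" where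
  "complete d s \<longleftrightarrow> (\<forall>i\<le>d. s i \<noteq> None)"

definition has_root :: "nat \<Rightarrow> (nat \<Rightarrow> 'a::comm_ring_1 option) \<Rightarrow> bool" where
  "has_root d s \<longleftrightarrow> (\<exists>x::'a. (\<Sum>i\<le>d. the (s i) * x ^ i) = 0)"

definition legal_move :: "nat \<Rightarrow> (nat \<Rightarrow> 'a::zero option) \<Rightarrow> nat \<Rightarrow> 'a \<Rightarrow> bool" where
  "legal_move d s i v \<longleftrightarrow> i \<le> d \<and> s i = None \<and> ((i = 0 \<or> i = d) \<longrightarrow> v \<noteq> 0)"

inductive wanda_wins :: "nat \<Rightarrow> bool \<Rightarrow> (nat \<Rightarrow> 'a::comm_ring_1 option) \<Rightarrow> bool"
  for d :: nat where
  terminal: "complete d s \<Longrightarrow> has_root d s \<Longrightarrow> wanda_wins d t s"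
| wanda_move: "\<not> complete d s \<Longrightarrow> legal_move d s i v \<Longrightarrow>
     wanda_wins d False (s(i := Some v)) \<Longrightarrow> wanda_wins d True s"
| nora_move: "\<not> complete d s \<Longrightarrow>
     (\<And>i v. legal_move d s i v \<Longrightarrow> wanda_wins d True (s(i := Some v))) \<Longrightarrow>
     wanda_wins d False s"

end

theory Submission
  imports Defs
begin

lemma UNIV16: "(UNIV::16 set) = {0,1,2,3,4,5,6,7,8,9,10,11,12,13,14,15}"
proof -
  have "{0,1,2,3,4,5,6,7,8,9,10,11,12,13,14,15} \<subseteq> (UNIV::16 set)" by simp
  moreover have "card {0,1,2,3,4,5,6,7,8,9,10,11,12,13,14,15::16} = card (UNIV::16 set)" by simp
  ultimately show ?thesis by (metis card_subset_eq finite)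
qed

lemma all16: "(\<forall>x::16. P x) \<longleftrightarrow> P 0 \<and> P 1 \<and> P 2 \<and> P 3 \<and> P 4 \<and> P 5 \<and> P 6 \<and> P 7 \<and> P 8 \<and> P 9 \<and> P 10 \<and> P 11 \<and> P 12 \<and> P 13 \<and> P 14 \<and> P 15"
  by (metis UNIV16 UNIV_I insert_iff empty_iff)

lemma ex16: "(\<exists>x::16. P x) \<longleftrightarrow> P 0 \<or> P 1 \<or> P 2 \<or> P 3 \<or> P 4 \<or> P 5 \<or> P 6 \<or> P 7 \<or> P 8 \<or> P 9 \<or> P 10 \<or> P 11 \<or> P 12 \<or> P 13 \<or> P 14 \<or> P 15"
  by (metis UNIV16 UNIV_I insert_iff empty_iff)

definition gg :: "16 \<Rightarrow> 16" where
  "gg v = (if v = 0 \<or> v = 8 then 3 else if v = 4 \<or> v = 12 then 1 else 0)"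

lemma P1: "\<forall>v w::16. w \<noteq> 0 \<longrightarrow> (\<exists>x. 4 + v*x + gg v * x^2 + w*x^3 = 0)"
  unfolding all16 ex16 gg_def by simp

lemma P2: "\<forall>c w::16. \<exists>x. 4 + x + c*x^2 + w*x^3 = 0"
  unfolding all16 ex16 by simp

lemma Kb: "\<forall>b c::16. 1+b+c \<noteq> 0 \<or> 1-b+c \<noteq> 0 \<or> 1+3*b+9*c \<noteq> 0"
  unfolding all16 by simp

lemma unit3: "\<forall>y::16. y \<noteq> 0 \<longrightarrow> -3*y \<noteq> 0"
  unfolding all16 by simp

lemma K: "\<exists>e x. e \<noteq> 0 \<and> 1 + b*x + c*x^2 + e*x^3 = (0::16)"
proof -
  have "1+b+c \<noteq> 0 \<or> 1-b+c \<noteq> 0 \<or> 1+3*b+9*c \<noteq> 0" using Kb by blast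
  then show ?thesis
  proof (elim disjE)
    assume h: "1+b+c \<noteq> 0"
    have e: "-(1+b+c) \<noteq> 0" using h by (metis neg_0_equal_iff_equal)
    have "1 + b*1 + c*1^2 + (-(1+b+c))*1^3 = (0::16)" by (simp add: algebra_simps)
    then show ?thesis using e by blast
  next
    assume h: "1-b+c \<noteq> 0"
    have "1 + b*(-1) + c*(-1)^2 + (1-b+c)*(-1)^3 = (0::16)" by (simp add: algebra_simps)
    then show ?thesis using h by blast
  next
    assume h: "1+3*b+9*c \<noteq> 0"
    have "(80::16) = 0" by simp
    define y where "y = 1+3*b+9*c"
    have y0: "y \<noteq> 0" using h y_def by simp
    have e: "-3*y \<noteq> 0" using unit3 y0 by blast
    have "1 + b*3 + c*3^2 + (-3*y)*3^3 = y * (1 - 81)" unfolding y_def by (simp add: algebra_simps)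
    also have "\<dots> = 0" by (simp add: \<open>(80::16) = 0\<close>)
    finally show ?thesis using e by blast
  qed
qed

definition st :: "16 option \<Rightarrow> 16 option \<Rightarrow> 16 option \<Rightarrow> 16 option \<Rightarrow> nat \<Rightarrow> 16 option" where
  "st a b c e = (\<lambda>i. if i = 0 then a else if i = 1 then b else if i = 2 then c else if i = 3 then e else None)"

lemma st_init: "(\<lambda>_. None) = st None None None None"
  by (simp add: st_def fun_eq_iff)

lemma st_upd:
  "(st a b c e)(0 := Some v) = st (Some v) b c e"
  "(st a b c e)(1 := Some v) = st a (Some v) c e"
  "(st a b c e)(2 := Some v) = st a b (Some v) e"
  "(st a b c e)(3 := Some v) = st a b c (Some v)"
  "(st a b c e)(Suc 0 := Some v) = st a (Some v) c e"
  by (auto simp: st_def fun_eq_iff)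

lemma st_app: "st a b c e 0 = a" "st a b c e 1 = b" "st a b c e 2 = c" "st a b c e 3 = e"
  "st a b c e (Suc 0) = b"
  by (auto simp: st_def)

lemma le3: "(i::nat) \<le> 3 \<Longrightarrow> i = 0 \<or> i = 1 \<or> i = 2 \<or> i = 3" by arith

lemma all_le3: "(\<forall>i::nat\<le>3. P i) \<longleftrightarrow> P 0 \<and> P 1 \<and> P 2 \<and> P 3"
  using le3 by auto

lemma complete_st: "complete 3 (st a b c e) \<longleftrightarrow> a \<noteq> None \<and> b \<noteq> None \<and> c \<noteq> None \<and> e \<noteq> None"
  unfolding complete_def all_le3 st_app by simp

lemma root_st: "a + b*x + c*x^2 + e*x^3 = 0 \<Longrightarrow> has_root 3 (st (Some a) (Some b) (Some c) (Some e))"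
  unfolding has_root_def
  by (rule exI[of _ x]) (simp add: eval_nat_numeral st_def algebra_simps)

lemma legal_st: "legal_move 3 (st a b c e) i v \<longleftrightarrow>
   ((i = 0 \<and> a = None \<and> v \<noteq> 0) \<or> (i = 1 \<and> b = None) \<or> (i = 2 \<and> c = None) \<or> (i = 3 \<and> e = None \<and> v \<noteq> 0))"
  unfolding legal_move_def
proof
  assume "i \<le> 3 \<and> st a b c e i = None \<and> ((i = 0 \<or> i = 3) \<longrightarrow> v \<noteq> 0)"
  then show "((i = 0 \<and> a = None \<and> v \<noteq> 0) \<or> (i = 1 \<and> b = None) \<or> (i = 2 \<and> c = None) \<or> (i = 3 \<and> e = None \<and> v \<noteq> 0))"
    using le3[of i] by (auto simp: st_app)
qed (auto simp: st_app)

lemma final_terminal: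
  "a + b*x + c*x^2 + e*x^3 = 0 \<Longrightarrow> wanda_wins 3 t (st (Some a) (Some b) (Some c) (Some e))"
  by (rule wanda_wins.terminal) (auto simp: complete_st intro: root_st)

lemma wmove: "\<not> complete 3 s \<Longrightarrow> legal_move 3 s i v \<Longrightarrow> wanda_wins 3 False (s(i := Some v)) \<Longrightarrow> wanda_wins 3 True s"
  by (rule wanda_wins.wanda_move)

lemma L_mid1: "wanda_wins 3 True (st (Some a) None (Some c) (Some e))"
proof (rule wmove[of _ 1 "-(a+c+e)"])
  show "wanda_wins 3 False ((st (Some a) None (Some c) (Some e))(1 := Some (- (a + c + e))))"
    unfolding st_upd by (rule final_terminal[where x=1]) simp
qed (auto simp: complete_st legal_st)

lemma L_mid2: "wanda_wins 3 True (st (Some a) (Some b) None (Some e))"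
proof (rule wmove[of _ 2 "-(a+b+e)"])
  show "wanda_wins 3 False ((st (Some a) (Some b) None (Some e))(2 := Some (- (a + b + e))))"
    unfolding st_upd by (rule final_terminal[where x=1]) simp
qed (auto simp: complete_st legal_st)

lemma L_N2: "wanda_wins 3 False (st (Some a) None None (Some e))"
proof (rule wanda_wins.nora_move)
  fix i v assume "legal_move 3 (st (Some a) None None (Some e)) i v"
  then have "i = 1 \<or> i = 2" by (auto simp: legal_st)
  then show "wanda_wins 3 True ((st (Some a) None None (Some e))(i := Some v))"
    by (auto simp: st_upd L_mid1 L_mid2)
qed (auto simp: complete_st)

lemma K_W: "wanda_wins 3 True (st (Some 1) (Some b) (Some c) None)"
proof -
  obtain e x where ex: "e \<noteq> 0" "1 + b*x + c*x^2 + e*x^3 = (0::16)" using K by blast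
  show ?thesis
  proof (rule wmove[of _ 3 e])
    show "wanda_wins 3 False ((st (Some 1) (Some b) (Some c) None)(3 := Some e))"
      unfolding st_upd by (rule final_terminal[where x=x]) (rule ex(2))
  qed (use ex in \<open>auto simp: complete_st legal_st\<close>)
qed

lemma N_B1: "wanda_wins 3 False (st (Some 1) (Some b) None None)"
proof (rule wanda_wins.nora_move)
  fix i v assume "legal_move 3 (st (Some 1) (Some b) None None) i v"
  then have "i = 2 \<or> i = 3" by (auto simp: legal_st)
  then show "wanda_wins 3 True ((st (Some 1) (Some b) None None)(i := Some v))"
    by (auto simp: st_upd K_W L_mid2)
qed (auto simp: complete_st)

lemma N_B2: "wanda_wins 3 False (st (Some 1) None (Some c) None)"
proof (rule wanda_wins.nora_move)
  fix i v assume "legal_move 3 (st (Some 1) None (Some c) None) i v"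
  then have "i = 1 \<or> i = 3" by (auto simp: legal_st)
  then show "wanda_wins 3 True ((st (Some 1) None (Some c) None)(i := Some v))"
    by (auto simp: st_upd K_W L_mid1)
qed (auto simp: complete_st)

lemma gameA: "wanda_wins 3 False (st None None None None)"
proof (rule wanda_wins.nora_move)
  fix i v assume "legal_move 3 (st None None None None) i v"
  then have "(i = 0 \<and> v \<noteq> 0) \<or> i = 1 \<or> i = 2 \<or> (i = 3 \<and> v \<noteq> 0)" by (auto simp: legal_st)
  then show "wanda_wins 3 True ((st None None None None)(i := Some v))"
  proof (elim disjE conjE)
    assume "i = 0" "v \<noteq> 0"
    show ?thesis unfolding \<open>i = 0\<close> st_upd
      by (rule wmove[of _ 3 1]) (auto simp: complete_st legal_st st_upd L_N2)
  next
    assume "i = 1"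
    show ?thesis unfolding \<open>i = 1\<close> st_upd
      by (rule wmove[of _ 0 1]) (auto simp: complete_st legal_st st_upd N_B1)
  next
    assume "i = 2"
    show ?thesis unfolding \<open>i = 2\<close> st_upd
      by (rule wmove[of _ 0 1]) (auto simp: complete_st legal_st st_upd N_B2)
  next
    assume "i = 3" "v \<noteq> 0"
    show ?thesis unfolding \<open>i = 3\<close> st_upd
      by (rule wmove[of _ 0 1]) (auto simp: complete_st legal_st st_upd L_N2)
  qed
qed (auto simp: complete_st)

lemma NF3: "(\<And>w. w \<noteq> 0 \<Longrightarrow> \<exists>x. a + b*x + c*x^2 + w*x^3 = 0) \<Longrightarrow>
  wanda_wins 3 False (st (Some a) (Some b) (Some c) None)"
proof (rule wanda_wins.nora_move)
  fix i v assume h: "\<And>w. w \<noteq> 0 \<Longrightarrow> \<exists>x. a + b*x + c*x^2 + w*x^3 = 0"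
    and "legal_move 3 (st (Some a) (Some b) (Some c) None) i v"
  then have "i = 3" "v \<noteq> 0" by (auto simp: legal_st)
  then obtain x where "a + b*x + c*x^2 + v*x^3 = 0" using h by blast
  then show "wanda_wins 3 True ((st (Some a) (Some b) (Some c) None)(i := Some v))"
    unfolding \<open>i = 3\<close> st_upd by (rule final_terminal)
qed (auto simp: complete_st)

lemma NF2: "(\<And>w. \<exists>x. a + b*x + w*x^2 + e*x^3 = 0) \<Longrightarrow>
  wanda_wins 3 False (st (Some a) (Some b) None (Some e))"
proof (rule wanda_wins.nora_move)
  fix i v assume h: "\<And>w. \<exists>x. a + b*x + w*x^2 + e*x^3 = 0"
    and "legal_move 3 (st (Some a) (Some b) None (Some e)) i v"
  then have "i = 2" by (auto simp: legal_st)
  obtain x where "a + b*x + v*x^2 + e*x^3 = 0" using h by blast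
  then show "wanda_wins 3 True ((st (Some a) (Some b) None (Some e))(i := Some v))"
    unfolding \<open>i = 2\<close> st_upd by (rule final_terminal)
qed (auto simp: complete_st)

lemma NB0: "wanda_wins 3 False (st (Some 4) None None None)"
proof (rule wanda_wins.nora_move)
  fix i v assume "legal_move 3 (st (Some 4) None None None) i v"
  then have "i = 1 \<or> i = 2 \<or> (i = 3 \<and> v \<noteq> 0)" by (auto simp: legal_st)
  then show "wanda_wins 3 True ((st (Some 4) None None None)(i := Some v))"
  proof (elim disjE conjE)
    assume "i = 1"
    have "wanda_wins 3 False (st (Some 4) (Some v) (Some (gg v)) None)"
      by (rule NF3) (use P1 in blast)
    then show ?thesis unfolding \<open>i = 1\<close> st_upd
      by (intro wmove[of _ 2 "gg v"]) (auto simp: complete_st legal_st st_upd)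
  next
    assume "i = 2"
    have "wanda_wins 3 False (st (Some 4) (Some 1) (Some v) None)"
      by (rule NF3) (use P2 in auto)
    then show ?thesis unfolding \<open>i = 2\<close> st_upd
      by (intro wmove[of _ 1 1]) (auto simp: complete_st legal_st st_upd)
  next
    assume "i = 3"
    have "wanda_wins 3 False (st (Some 4) (Some 1) None (Some v))"
      by (rule NF2) (use P2 in auto)
    then show ?thesis unfolding \<open>i = 3\<close> st_upd
      by (intro wmove[of _ 1 1]) (auto simp: complete_st legal_st st_upd)
  qed
qed (auto simp: complete_st)

lemma gameB: "wanda_wins 3 True (st None None None None)"
  by (rule wmove[of _ 0 4]) (auto simp: complete_st legal_st st_upd NB0)

theorem lemma9:
  shows "wanda_wins 3 True (\<lambda>_. None :: 16 option) \<and> wanda_wins 3 False (\<lambda>_. None :: 16 option)"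
  unfolding st_init using gameA gameB by blast

end
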